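(* Let $\mathcal{C}=\langle C_\delta:\delta\in\mathrm{Lim}\rangle$ be a $\clubsuit$-sequence, let $n\geq1$, and let $\mathcal{F}$ be a construction scheme over $\omega_1$ of a good type which satisfies $IH_\rho(\mathcal{C},n)$. Then $\mathcal{F}$ is $(n+1)$-$\rho$-capturing.
   Context: $\mathrm{Lim}$ is the set of nonzero countable limit ordinals. A $\clubsuit$-sequence is $\langle C_\delta:\delta\in\mathrm{Lim}\rangle$ with $C_\delta\subseteq\delta$ of order type $\omega$, $\sup C_\delta=\delta$, and $\{\delta:C_\delta\subseteq S\}$ stationary for every uncountable $S\subseteq\omega_1$. $\mathrm{Lim}_0=\mathrm{Lim}$, $\mathrm{Lim}_{n+1}=\{\delta\in\mathrm{Lim}:C_\delta\subseteq\mathrm{Lim}_n\}$; $C^0_\delta=C_\delta$, $C^{n+1}_\delta=\bigcup_{\xi\in C_\delta}C^n_\xi$ for $\delta\in\mathrm{Lim}_{n+1}$. A type is a sequence $\langle m_k,n_{k+1},r_{k+1}\rangle_{k\in\omega}$ of natural numbers with $m_0=1$ and, for all $k$, $n_{k+1}\geq2$, $m_k>r_{k+1}$, $m_{k+1}=r_{k+1}+(m_k-r_{k+1})n_{k+1}$; good if every $r$ equals $r_k$ for infinitely many $k\geq1$. $A<B$ means every element of $A$ is below every element of $B$; $D(a)$ is the $a$-th element of a finite set of ordinals $D$. A construction scheme of type $\tau$ over a set of ordinals $Y$ is a family $\mathcal{F}$ of nonempty finite subsets of $Y$, cofinal among finite subsets of $Y$ under $\subseteq$, each of size $m_k$ for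 some $k$, with $\mathcal{F}_k=\{F\in\mathcal{F}:|F|=m_k\}$ satisfying: (i) for $E,F\in\mathcal{F}_k$, $E\cap F$ is an initial segment of both; (ii) every $F\in\mathcal{F}_{k+1}$ equals $F_0\cup\dots\cup F_{n_{k+1}-1}$ with $F_i\in\mathcal{F}_k$ a $\Delta$-system with root $R(F)$, $|R(F)|=r_{k+1}$, $R(F)<F_0\setminus R(F)<\dots<F_{n_{k+1}-1}\setminus R(F)$ (the canonical pieces). $\rho(\alpha,\beta)=\min\{k:\exists F\in\mathcal{F}_k\ \{\alpha,\beta\}\subseteq F\}$; $(\alpha)_k=\{\xi\leq\alpha:\rho(\xi,\alpha)\leq k\}$; for $k\geq1$, $\Xi_\alpha(k)=-1$ if $\alpha\in R(F)$ and $=i$ if $\alpha\in F_i\setminus R(F)$, for any $F\in\mathcal{F}_k$ containing $\alpha$. A root-tail-tail $\Delta$-system is a family (or sequence $\langle D_i\rangle_{i<n}$), $n\geq2$, of finite sets of ordinals of common size $m$ with pairwise intersections equal to a root $R$, $R<D_i\setminus R$, and $D_0\setminus R<\dots<D_{n-1}\setminus R$; $r=|R|$. It is $\rho$-captured at level $l\geq1$ if $n\leq n_l$, (I) $\Xi_{D_i(a)}(l)=-1$ for $a<r$ and $=i$ for $a\geq r$ ($i<n$, $a<m$), and (II) $\rho(D_i(a),D_j(a))=l$ for $i<j<n$, $r\leq a<m$. A scheme over $\omega_1$ is $n$-$\rho$-capturing if for every uncountable family $\mathcal{S}$ of nonempty finite subsets of $\omega_1$ there are infinitely many $l$ for which some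 $n$ distinct members of $\mathcal{S}$, suitably enumerated, form a root-tail-tail $\Delta$-system $\rho$-captured at level $l$. A tuple $(n,\delta,k,A)$ is $\mathcal{F}$-good if $n,k\in\omega$, $\delta\in\mathrm{Lim}_n$, the family $\{(\xi)_k:\xi\in C^n_\delta\}$ is a root-tail-tail $\Delta$-system with some root $R^n_k(\delta)$, and $A$ is a nonempty finite subset of $[\delta,\omega_1)$. $\mathcal{F}$ satisfies $IH_\rho(\mathcal{C},n)$ if for every $\mathcal{F}$-good tuple $(n,\delta,k,A)$ there are infinitely many $l\geq k$ with $n_l>n$ for which there exist $F\in\mathcal{F}_l$ (with canonical pieces $F_0,\dots,F_{n_l-1}$ and root $R(F)$) and an $n$-element set $D\subseteq C^n_\delta$ (with $D(i)$ its $i$-th element) such that $A\subseteq F_n\setminus R(F)$ and, for each $i<n$, $(D(i))_k\subseteq F_i$ and $(D(i))_k\cap R(F)=R^n_k(\delta)$. *)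

theory Defs
  imports Main "HOL-Library.Countable_Set"
begin

text \<open>The ambient type 'a (a wellorder) plays the role of omega_1: it is
uncountable and all proper initial segments are countable.\<close>

definition omega1_like :: "'a::wellorder itself \<Rightarrow> bool" where
  "omega1_like _ \<longleftrightarrow> uncountable (UNIV :: 'a set) \<and> (\<forall>x::'a. countable {..<x})"

definition Lim :: "'a::wellorder set" where
  "Lim = {\<delta>. (\<exists>\<alpha>. \<alpha> < \<delta>) \<and> (\<forall>\<alpha><\<delta>. \<exists>\<beta>. \<alpha> < \<beta> \<and> \<beta> < \<delta>)}"

definition club :: "'a::wellorder set \<Rightarrow> bool" where
  "club C \<longleftrightarrow> (\<forall>\<alpha>. \<exists>c\<in>C. \<alpha> < c) \<and>
     (\<forall>\<delta>\<in>Lim. (\<forall>\<alpha><\<delta>. \<exists>c\<in>C. \<alpha> < c \<and> c < \<delta>) \<longrightarrow> \<delta> \<in> C)"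

definition stationary :: "'a::wellorder set \<Rightarrow> bool" where
  "stationary S \<longleftrightarrow> (\<forall>C. club C \<longrightarrow> S \<inter> C \<noteq> {})"

text \<open>C is a clubsuit-sequence (its values outside Lim are irrelevant).\<close>
definition clubsuit_seq :: "('a::wellorder \<Rightarrow> 'a set) \<Rightarrow> bool" where
  "clubsuit_seq C \<longleftrightarrow>
     (\<forall>\<delta>\<in>Lim. C \<delta> \<subseteq> {..<\<delta>} \<and> infinite (C \<delta>) \<and> (\<forall>x\<in>C \<delta>. finite {y\<in>C \<delta>. y < x})
              \<and> (\<forall>\<alpha><\<delta>. \<exists>c\<in>C \<delta>. \<alpha> < c)) \<and>
     (\<forall>S. uncountable S \<longrightarrow> stationary {\<delta>\<in>Lim. C \<delta> \<subseteq> S})"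

fun LimN :: "('a::wellorder \<Rightarrow> 'a set) \<Rightarrow> nat \<Rightarrow> 'a set" where
  "LimN C 0 = Lim"
| "LimN C (Suc n) = {\<delta>\<in>Lim. C \<delta> \<subseteq> LimN C n}"

fun CN :: "('a::wellorder \<Rightarrow> 'a set) \<Rightarrow> nat \<Rightarrow> 'a \<Rightarrow> 'a set" where
  "CN C 0 \<delta> = C \<delta>"
| "CN C (Suc n) \<delta> = (\<Union>\<xi>\<in>C \<delta>. CN C n \<xi>)"

text \<open>Types: m k, nn (k+1), r (k+1); the values nn 0, r 0 are irrelevant.\<close>
definition is_type :: "(nat \<Rightarrow> nat) \<Rightarrow> (nat \<Rightarrow> nat) \<Rightarrow> (nat \<Rightarrow> nat) \<Rightarrow> bool" where
  "is_type m nn r \<longleftrightarrow> m 0 = 1 \<and>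
     (\<forall>k. nn (Suc k) \<ge> 2 \<and> m k > r (Suc k) \<and> m (Suc k) = r (Suc k) + (m k - r (Suc k)) * nn (Suc k))"

definition good_type :: "(nat \<Rightarrow> nat) \<Rightarrow> (nat \<Rightarrow> nat) \<Rightarrow> (nat \<Rightarrow> nat) \<Rightarrow> bool" where
  "good_type m nn r \<longleftrightarrow> is_type m nn r \<and> (\<forall>x. infinite {k. k \<ge> 1 \<and> r k = x})"

definition set_less :: "'a::linorder set \<Rightarrow> 'a set \<Rightarrow> bool" where
  "set_less A B \<longleftrightarrow> (\<forall>a\<in>A. \<forall>b\<in>B. a < b)"

definition init_seg :: "'a::linorder set \<Rightarrow> 'a set \<Rightarrow> bool" where
  "init_seg X Y \<longleftrightarrow> X \<subseteq> Y \<and> (\<forall>x\<in>X. \<forall>y\<in>Y. y < x \<longrightarrow> y \<in> X)"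

text \<open>D(a): the a-th element (counting from 0) of a finite set D.\<close>
definition elem :: "'a::linorder set \<Rightarrow> nat \<Rightarrow> 'a" where
  "elem D a = sorted_list_of_set D ! a"

definition level :: "'a set set \<Rightarrow> (nat \<Rightarrow> nat) \<Rightarrow> nat \<Rightarrow> 'a set set" where
  "level F m k = {G\<in>F. card G = m k}"

definition canon_pieces ::
  "'a::linorder set set \<Rightarrow> (nat \<Rightarrow> nat) \<Rightarrow> (nat \<Rightarrow> nat) \<Rightarrow> (nat \<Rightarrow> nat)
     \<Rightarrow> nat \<Rightarrow> 'a set \<Rightarrow> 'a set \<Rightarrow> (nat \<Rightarrow> 'a set) \<Rightarrow> bool" where
  "canon_pieces F m nn r l G R Gs \<longleftrightarrow> (\<exists>k. l = Suc k \<and>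
     G \<in> level F m l \<and>
     (\<forall>i<nn l. Gs i \<in> level F m k) \<and>
     G = (\<Union>i<nn l. Gs i) \<and>
     (\<forall>i<nn l. \<forall>j<nn l. i \<noteq> j \<longrightarrow> Gs i \<inter> Gs j = R) \<and>
     card R = r l \<and>
     set_less R (Gs 0 - R) \<and>
     (\<forall>i. Suc i < nn l \<longrightarrow> set_less (Gs i - R) (Gs (Suc i) - R)))"

definition construction_scheme ::
  "'a::linorder set set \<Rightarrow> (nat \<Rightarrow> nat) \<Rightarrow> (nat \<Rightarrow> nat) \<Rightarrow> (nat \<Rightarrow> nat) \<Rightarrow> bool" where
  "construction_scheme F m nn r \<longleftrightarrow> is_type m nn r \<and>
     (\<forall>G\<in>F. finite G \<and> G \<noteq> {} \<and> (\<exists>k. card G = m k)) \<and>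
     (\<forall>A. finite A \<longrightarrow> (\<exists>G\<in>F. A \<subseteq> G)) \<and>
     (\<forall>k. \<forall>E\<in>level F m k. \<forall>G\<in>level F m k. init_seg (E \<inter> G) E \<and> init_seg (E \<inter> G) G) \<and>
     (\<forall>k. \<forall>G\<in>level F m (Suc k). \<exists>R Gs. canon_pieces F m nn r (Suc k) G R Gs)"

definition rho :: "'a set set \<Rightarrow> (nat \<Rightarrow> nat) \<Rightarrow> 'a \<Rightarrow> 'a \<Rightarrow> nat" where
  "rho F m \<alpha> \<beta> = (LEAST k. \<exists>G\<in>level F m k. {\<alpha>, \<beta>} \<subseteq> G)"

definition closure_k :: "'a::linorder set set \<Rightarrow> (nat \<Rightarrow> nat) \<Rightarrow> 'a \<Rightarrow> nat \<Rightarrow> 'a set" where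
  "closure_k F m \<alpha> k = {\<xi>. \<xi> \<le> \<alpha> \<and> rho F m \<xi> \<alpha> \<le> k}"

text \<open>Xi F m nn r \<alpha> l i  means  Xi_\<alpha>(l) = i  (with -1 for the root).\<close>
definition Xi ::
  "'a::linorder set set \<Rightarrow> (nat \<Rightarrow> nat) \<Rightarrow> (nat \<Rightarrow> nat) \<Rightarrow> (nat \<Rightarrow> nat) \<Rightarrow> 'a \<Rightarrow> nat \<Rightarrow> int \<Rightarrow> bool" where
  "Xi F m nn r \<alpha> l i \<longleftrightarrow> (\<exists>G R Gs. canon_pieces F m nn r l G R Gs \<and> \<alpha> \<in> G \<and>
      ((i = -1 \<and> \<alpha> \<in> R) \<or> (i \<ge> 0 \<and> \<alpha> \<in> Gs (nat i) - R)))"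

definition rtt_seq :: "(nat \<Rightarrow> 'a::linorder set) \<Rightarrow> nat \<Rightarrow> 'a set \<Rightarrow> bool" where
  "rtt_seq Ds n R \<longleftrightarrow> n \<ge> 2 \<and> (\<forall>i<n. finite (Ds i) \<and> card (Ds i) = card (Ds 0)) \<and>
     (\<forall>i<n. \<forall>j<n. i \<noteq> j \<longrightarrow> Ds i \<inter> Ds j = R) \<and>
     (\<forall>i<n. set_less R (Ds i - R)) \<and>
     (\<forall>i j. i < j \<and> j < n \<longrightarrow> set_less (Ds i - R) (Ds j - R))"

definition rtt_family :: "'a::linorder set set \<Rightarrow> 'a set \<Rightarrow> bool" where
  "rtt_family \<D> R \<longleftrightarrow> (\<exists>D E. D \<in> \<D> \<and> E \<in> \<D> \<and> D \<noteq> E) \<and>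
     (\<exists>mm. \<forall>D\<in>\<D>. finite D \<and> card D = mm) \<and>
     (\<forall>D\<in>\<D>. \<forall>E\<in>\<D>. D \<noteq> E \<longrightarrow> D \<inter> E = R) \<and>
     (\<forall>D\<in>\<D>. set_less R (D - R)) \<and>
     (\<forall>D\<in>\<D>. \<forall>E\<in>\<D>. D \<noteq> E \<longrightarrow> set_less (D - R) (E - R) \<or> set_less (E - R) (D - R))"

definition rho_captured ::
  "'a::linorder set set \<Rightarrow> (nat \<Rightarrow> nat) \<Rightarrow> (nat \<Rightarrow> nat) \<Rightarrow> (nat \<Rightarrow> nat)
     \<Rightarrow> (nat \<Rightarrow> 'a set) \<Rightarrow> nat \<Rightarrow> nat \<Rightarrow> bool" where
  "rho_captured F m nn r Ds n l \<longleftrightarrow> l \<ge> 1 \<and> n \<le> nn l \<and>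
     (\<exists>R. rtt_seq Ds n R \<and>
       (\<forall>i<n. \<forall>a<card (Ds 0).
          (a < card R \<longrightarrow> Xi F m nn r (elem (Ds i) a) l (-1)) \<and>
          (a \<ge> card R \<longrightarrow> Xi F m nn r (elem (Ds i) a) l (int i))) \<and>
       (\<forall>i j a. i < j \<and> j < n \<and> card R \<le> a \<and> a < card (Ds 0) \<longrightarrow>
          rho F m (elem (Ds i) a) (elem (Ds j) a) = l))"

definition rho_capturing ::
  "'a::linorder set set \<Rightarrow> (nat \<Rightarrow> nat) \<Rightarrow> (nat \<Rightarrow> nat) \<Rightarrow> (nat \<Rightarrow> nat) \<Rightarrow> nat \<Rightarrow> bool" where
  "rho_capturing F m nn r n \<longleftrightarrow>
     (\<forall>\<S>. uncountable \<S> \<and> (\<forall>s\<in>\<S>. finite s \<and> s \<noteq> {}) \<longrightarrow>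
        infinite {l. \<exists>Ds. (\<forall>i<n. Ds i \<in> \<S>) \<and> inj_on Ds {..<n} \<and> rho_captured F m nn r Ds n l})"

definition good_tuple ::
  "('a::wellorder \<Rightarrow> 'a set) \<Rightarrow> 'a set set \<Rightarrow> (nat \<Rightarrow> nat) \<Rightarrow> nat \<Rightarrow> 'a \<Rightarrow> nat \<Rightarrow> 'a set \<Rightarrow> bool" where
  "good_tuple C F m n \<delta> k A \<longleftrightarrow> \<delta> \<in> LimN C n \<and>
     (\<exists>R. rtt_family ((\<lambda>\<xi>. closure_k F m \<xi> k) ` CN C n \<delta>) R) \<and>
     A \<noteq> {} \<and> finite A \<and> (\<forall>a\<in>A. \<delta> \<le> a)"

definition IH_rho ::
  "('a::wellorder \<Rightarrow> 'a set) \<Rightarrow> 'a set set \<Rightarrow> (nat \<Rightarrow> nat) \<Rightarrow> (nat \<Rightarrow> nat) \<Rightarrow> (nat \<Rightarrow> nat) \<Rightarrow> nat \<Rightarrow> bool" where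
  "IH_rho C F m nn r n \<longleftrightarrow>
     (\<forall>\<delta> k A R. good_tuple C F m n \<delta> k A \<and>
        rtt_family ((\<lambda>\<xi>. closure_k F m \<xi> k) ` CN C n \<delta>) R \<longrightarrow>
        infinite {l. l \<ge> k \<and> nn l > n \<and>
          (\<exists>G RG Gs D. canon_pieces F m nn r l G RG Gs \<and>
             D \<subseteq> CN C n \<delta> \<and> finite D \<and> card D = n \<and>
             A \<subseteq> Gs n - RG \<and>
             (\<forall>i<n. closure_k F m (elem D i) k \<subseteq> Gs i \<and>
                     closure_k F m (elem D i) k \<inter> RG = R))})"

end

theory Submission
  imports Defs
begin

lemma o1_uncountable: "omega1_like TYPE('a::wellorder) \<Longrightarrow> uncountable (UNIV::'a set)"
  by (simp add: omega1_like_def)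

lemma o1_countable_le: "omega1_like TYPE('a::wellorder) \<Longrightarrow> countable {..(x::'a)}"
proof -
  assume "omega1_like TYPE('a)"
  then have "countable {..<x}" by (simp add: omega1_like_def)
  moreover have "{..x} = insert x {..<x}" by auto
  ultimately show ?thesis by simp
qed

lemma o1_bounded:
  assumes "omega1_like TYPE('a::wellorder)" "countable (B::'a set)"
  shows "\<exists>\<gamma>. \<forall>b\<in>B. b < \<gamma>"
proof -
  have "countable (\<Union>b\<in>B. {..b})" using assms o1_countable_le by (intro countable_UN) auto
  then have "(\<Union>b\<in>B. {..b}) \<noteq> UNIV" using o1_uncountable[OF assms(1)] by auto
  then obtain \<gamma> where "\<gamma> \<notin> (\<Union>b\<in>B. {..b})" by auto
  then show ?thesis by (auto simp: not_le)
qed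

lemma o1_unbounded_uncountable:
  assumes "omega1_like TYPE('a::wellorder)" "\<forall>\<alpha>. \<exists>x\<in>(K::'a set). \<alpha> < x"
  shows "uncountable K"
proof
  assume "countable K"
  then obtain \<gamma> where "\<forall>b\<in>K. b < \<gamma>" using o1_bounded[OF assms(1)] by blast
  then show False using assms(2) by (meson less_asym)
qed

lemma pigeon:
  assumes "uncountable A" "countable B" "\<forall>x\<in>A. f x \<in> B"
  shows "\<exists>y\<in>B. uncountable {x\<in>A. f x = y}"
proof (rule ccontr)
  assume "\<not> ?thesis"
  then have "countable (\<Union>y\<in>B. {x\<in>A. f x = y})" using assms(2) by (intro countable_UN) auto
  moreover have "A = (\<Union>y\<in>B. {x\<in>A. f x = y})" using assms(3) by auto
  ultimately show False using assms(1) by simp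
qed

lemma closure_points_unbounded:
  fixes g :: "'a::wellorder \<Rightarrow> 'a"
  assumes o1: "omega1_like TYPE('a)"
  shows "\<exists>\<gamma>>\<alpha>. \<forall>\<zeta><\<gamma>. g \<zeta> < \<gamma>"
proof -
  define bnd where "bnd = (\<lambda>B::'a set. SOME \<gamma>. \<forall>b\<in>B. b < \<gamma>)"
  have bnd: "countable B \<Longrightarrow> \<forall>b\<in>B. b < bnd B" for B
  proof -
    assume "countable B"
    then obtain c where "\<forall>b\<in>B. b < c" using o1_bounded[OF o1] by blast
    then show ?thesis unfolding bnd_def by (rule someI)
  qed
  define a where "a = rec_nat \<alpha> (\<lambda>_ x. bnd (insert x (g ` {..x})))"
  have a0: "a 0 = \<alpha>" by (simp add: a_def)
  have aS: "a (Suc n) = bnd (insert (a n) (g ` {..a n}))" for n by (simp add: a_def)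
  have cnt: "countable (insert (a n) (g ` {..a n}))" for n using o1_countable_le[OF o1] by auto
  have a1: "a n < a (Suc n)" "\<forall>\<zeta>\<le>a n. g \<zeta> < a (Suc n)" for n using bnd[OF cnt[of n]] aS by auto
  obtain u where u: "\<forall>b\<in>range a. b < u" using o1_bounded[OF o1, of "range a"] by auto
  define \<gamma> where "\<gamma> = (LEAST \<gamma>. \<forall>n. a n \<le> \<gamma>)"
  have ub: "\<forall>n. a n \<le> u" using u by (auto intro: less_imp_le)
  have \<gamma>: "\<forall>n. a n \<le> \<gamma>" unfolding \<gamma>_def by (rule LeastI[where P="\<lambda>\<gamma>. \<forall>n. a n \<le> \<gamma>", OF ub])
  have \<gamma>le: "(\<forall>n. a n \<le> z) \<Longrightarrow> \<gamma> \<le> z" for z unfolding \<gamma>_def by (rule Least_le)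
  have "\<alpha> < \<gamma>" using a1(1)[of 0] \<gamma> a0 by (metis order.strict_trans2)
  moreover have "g \<zeta> < \<gamma>" if z: "\<zeta> < \<gamma>" for \<zeta>
  proof -
    have "\<exists>n. \<zeta> < a n" using \<gamma>le[of \<zeta>] z by (meson not_le)
    then obtain n where "\<zeta> < a n" by blast
    then have "g \<zeta> < a (Suc n)" using a1(2) by auto
    then show ?thesis using \<gamma> by (meson order.strict_trans2)
  qed
  ultimately show ?thesis by blast
qed

lemma sparse:
  fixes Y :: "'a::wellorder set"
  assumes o1: "omega1_like TYPE('a)" and Y: "uncountable Y"
    and cnt: "\<forall>\<beta>. countable {\<xi>\<in>Y. t \<xi> \<le> \<beta>}" and tle: "\<forall>\<xi>\<in>Y. t \<xi> \<le> \<xi>"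
  shows "\<exists>X\<subseteq>Y. uncountable X \<and> (\<forall>\<xi>\<in>X. \<forall>\<xi>'\<in>X. \<xi> < \<xi>' \<longrightarrow> \<xi> < t \<xi>')"
proof -
  have ex: "\<exists>\<xi>\<in>Y. \<gamma> < t \<xi>" for \<gamma>
  proof (rule ccontr)
    assume "\<not> ?thesis"
    then have "Y = {\<xi>\<in>Y. t \<xi> \<le> \<gamma>}" by (auto simp: not_less)
    then show False using cnt Y by metis
  qed
  define g where "g = (\<lambda>\<gamma>. SOME \<xi>. \<xi>\<in>Y \<and> \<gamma> < t \<xi>)"
  have g: "g \<gamma> \<in> Y \<and> \<gamma> < t (g \<gamma>)" for \<gamma> unfolding g_def using ex[of \<gamma>] by (metis (mono_tags, lifting) someI_ex)
  define K where "K = {\<gamma>. \<forall>\<zeta><\<gamma>. g \<zeta> < \<gamma>}"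
  have key: "g \<gamma> < t (g \<gamma>')" if "\<gamma> \<in> K" "\<gamma>' \<in> K" "\<gamma> < \<gamma>'" for \<gamma> \<gamma>'
  proof -
    have "g \<gamma> < \<gamma>'" using that unfolding K_def by auto
    then show ?thesis using g[of \<gamma>'] by (meson less_trans)
  qed
  have Kunc: "uncountable K"
    using closure_points_unbounded[OF o1, of _ g] o1_unbounded_uncountable[OF o1, of K]
    unfolding K_def by blast
  have inj: "inj_on g K"
  proof (rule inj_onI)
    fix x y assume "x \<in> K" "y \<in> K" "g x = g y"
    then show "x = y" using key g tle
      by (metis linorder_neqE order.strict_trans2 less_irrefl)
  qed
  have "uncountable (g ` K)" using Kunc inj countable_image_inj_on by blast
  moreover have "g ` K \<subseteq> Y" using g by auto
  moreover have "\<forall>\<xi>\<in>g ` K. \<forall>\<xi>'\<in>g ` K. \<xi> < \<xi>' \<longrightarrow> \<xi> < t \<xi>'"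
  proof (intro ballI impI)
    fix \<xi> \<xi>' assume "\<xi> \<in> g ` K" "\<xi>' \<in> g ` K" "\<xi> < \<xi>'"
    then obtain \<gamma> \<gamma>' where gg: "\<gamma> \<in> K" "\<gamma>' \<in> K" "\<xi> = g \<gamma>" "\<xi>' = g \<gamma>'" by auto
    show "\<xi> < t \<xi>'"
    proof (cases "\<gamma> < \<gamma>'")
      case True then show ?thesis using key gg by auto
    next
      case False
      then have "\<gamma>' < \<gamma> \<or> \<gamma> = \<gamma>'" by auto
      then show ?thesis
      proof
        assume "\<gamma>' < \<gamma>"
        then have "\<xi>' < t \<xi>" using key gg by auto
        then have "\<xi>' < \<xi>" using tle g gg by (meson order.strict_trans2)
        then show ?thesis using \<open>\<xi> < \<xi>'\<close> by auto
      qed (use gg \<open>\<xi> < \<xi>'\<close> in auto)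
    qed
  qed
  ultimately show ?thesis by blast
qed

lemma split_sorted:
  fixes L :: "'a::linorder list"
  assumes s: "sorted_wrt (<) L" and p: "p < length L"
  shows "set L - set (take p L) = set (drop p L)"
    and "\<forall>x\<in>set (take p L). \<forall>y\<in>set (drop p L). x < y"
    and "L ! p \<in> set (drop p L)"
    and "\<forall>y\<in>set (drop p L). L ! p \<le> y"
proof -
  have L: "L = take p L @ drop p L" by simp
  have sw: "sorted_wrt (<) (take p L @ drop p L)" using s by simp
  then show lt: "\<forall>x\<in>set (take p L). \<forall>y\<in>set (drop p L). x < y"
    unfolding sorted_wrt_append by blast
  have "set L = set (take p L) \<union> set (drop p L)" by (metis L set_append)
  moreover have "set (take p L) \<inter> set (drop p L) = {}" using lt by fastforce
  ultimately show "set L - set (take p L) = set (drop p L)" by blast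
  have d: "drop p L = L ! p # drop (Suc p) L" using p by (simp add: Cons_nth_drop_Suc)
  then show "L ! p \<in> set (drop p L)" by simp
  have "sorted_wrt (<) (drop p L)" using s by (simp add: sorted_wrt_drop)
  then show "\<forall>y\<in>set (drop p L). L ! p \<le> y" by (subst d) (auto simp: d less_imp_le)
qed

lemma delta:
  fixes X :: "'a::wellorder set" and f :: "'a \<Rightarrow> 'a set"
  assumes o1: "omega1_like TYPE('a)" and X: "uncountable X"
    and fin: "\<forall>\<xi>\<in>X. finite (f \<xi>) \<and> \<xi> \<in> f \<xi> \<and> (\<forall>z\<in>f \<xi>. z \<le> \<xi>) \<and> card (f \<xi>) = M"
  shows "\<exists>X'\<subseteq>X. \<exists>R t. uncountable X' \<and>
     (\<forall>\<xi>\<in>X'. R \<subseteq> f \<xi> \<and> set_less R (f \<xi> - R) \<and> t \<xi> \<in> f \<xi> - R \<and> (\<forall>z\<in>f \<xi> - R. t \<xi> \<le> z)) \<and>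
     (\<forall>\<xi>\<in>X'. \<forall>\<xi>'\<in>X'. \<xi> < \<xi>' \<longrightarrow> \<xi> < t \<xi>')"
proof -
  define L where "L = (\<lambda>\<xi>. sorted_list_of_set (f \<xi>))"
  have Lp: "sorted_wrt (<) (L \<xi>) \<and> set (L \<xi>) = f \<xi> \<and> length (L \<xi>) = M" if "\<xi> \<in> X" for \<xi>
    using fin that by (simp add: L_def)
  define Good where "Good = (\<lambda>p. \<exists>Lp. uncountable {\<xi>\<in>X. take p (L \<xi>) = Lp})"
  have G0: "Good 0" using X unfolding Good_def by (intro exI[of _ "[]"]) simp
  define p where "p = Max {q. q \<le> M \<and> Good q}"
  have pfin: "finite {q. q \<le> M \<and> Good q}" by simp
  have pin: "p \<in> {q. q \<le> M \<and> Good q}" unfolding p_def using G0 by (intro Max_in[OF pfin]) auto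
  have pmax: "q \<le> p" if "q \<le> M" "Good q" for q unfolding p_def using that pfin by (intro Max_ge) auto
  obtain Lp where Yu: "uncountable {\<xi>\<in>X. take p (L \<xi>) = Lp}" using pin Good_def by auto
  define Y where "Y = {\<xi>\<in>X. take p (L \<xi>) = Lp}"
  have Yu': "uncountable Y" using Yu Y_def by simp
  have pM: "p < M"
  proof (rule ccontr)
    assume "\<not> p < M"
    then have pM: "p = M" using pin by auto
    have "Y \<subseteq> {Max (set Lp)}"
    proof
      fix \<xi> assume "\<xi> \<in> Y"
      then have "\<xi> \<in> X" "L \<xi> = Lp" using Lp pM unfolding Y_def by auto
      then have "f \<xi> = set Lp" using Lp by auto
      then have "Max (set Lp) = \<xi>" using fin \<open>\<xi> \<in> X\<close> by (intro Max_eqI) auto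
      then show "\<xi> \<in> {Max (set Lp)}" by simp
    qed
    then have "countable Y" by (rule countable_subset) simp
    then show False using Yu' by simp
  qed
  define t where "t = (\<lambda>\<xi>. L \<xi> ! p)"
  have cntY: "countable {\<xi>\<in>Y. t \<xi> \<le> \<beta>}" for \<beta>
  proof (rule ccontr)
    assume u: "uncountable {\<xi>\<in>Y. t \<xi> \<le> \<beta>}"
    obtain v where v: "uncountable {\<xi>\<in>{\<xi>\<in>Y. t \<xi> \<le> \<beta>}. t \<xi> = v}"
      using pigeon[OF u, of "{..\<beta>}" t] o1_countable_le[OF o1] by auto
    have "{\<xi>\<in>{\<xi>\<in>Y. t \<xi> \<le> \<beta>}. t \<xi> = v} \<subseteq> {\<xi>\<in>X. take (Suc p) (L \<xi>) = Lp @ [v]}"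
    proof
      fix \<xi> assume a: "\<xi> \<in> {\<xi>\<in>{\<xi>\<in>Y. t \<xi> \<le> \<beta>}. t \<xi> = v}"
      then have "\<xi> \<in> X" "take p (L \<xi>) = Lp" "L \<xi> ! p = v" unfolding Y_def t_def by auto
      moreover have "p < length (L \<xi>)" using Lp[OF \<open>\<xi> \<in> X\<close>] pM by simp
      ultimately show "\<xi> \<in> {\<xi>\<in>X. take (Suc p) (L \<xi>) = Lp @ [v]}"
        by (simp add: take_Suc_conv_app_nth)
    qed
    then have "uncountable {\<xi>\<in>X. take (Suc p) (L \<xi>) = Lp @ [v]}"
      using v countable_subset by blast
    then have "Good (Suc p)" unfolding Good_def by blast
    then have "Suc p \<le> p" using pmax pM by simp
    then show False by simp
  qed
  have tle: "\<forall>\<xi>\<in>Y. t \<xi> \<le> \<xi>"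
  proof
    fix \<xi> assume "\<xi> \<in> Y"
    then have "\<xi> \<in> X" by (simp add: Y_def)
    then have "t \<xi> \<in> f \<xi>" using Lp pM unfolding t_def by (metis nth_mem)
    then show "t \<xi> \<le> \<xi>" using fin \<open>\<xi> \<in> X\<close> by blast
  qed
  obtain X' where X': "X' \<subseteq> Y" "uncountable X'" "\<forall>\<xi>\<in>X'. \<forall>\<xi>'\<in>X'. \<xi> < \<xi>' \<longrightarrow> \<xi> < t \<xi>'"
    using sparse[OF o1 Yu' _ tle] cntY by blast
  have props: "set Lp \<subseteq> f \<xi> \<and> set_less (set Lp) (f \<xi> - set Lp) \<and> t \<xi> \<in> f \<xi> - set Lp \<and> (\<forall>z\<in>f \<xi> - set Lp. t \<xi> \<le> z)"
    if "\<xi> \<in> Y" for \<xi>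
  proof -
    have x: "\<xi> \<in> X" "take p (L \<xi>) = Lp" using that Y_def by auto
    note l = Lp[OF x(1)]
    have pl: "p < length (L \<xi>)" using l pM by simp
    note ss = split_sorted[OF conjunct1[OF l] pl]
    have e: "f \<xi> - set Lp = set (drop p (L \<xi>))" using ss(1) l x(2) by simp
    have "set Lp \<subseteq> f \<xi>" using l x(2) by (metis set_take_subset)
    moreover have "set_less (set Lp) (f \<xi> - set Lp)" using ss(2) e x(2) unfolding set_less_def by simp
    moreover have "t \<xi> \<in> f \<xi> - set Lp" using ss(3) e unfolding t_def by simp
    moreover have "\<forall>z\<in>f \<xi> - set Lp. t \<xi> \<le> z" using ss(4) e unfolding t_def by simp
    ultimately show ?thesis by blast
  qed
  have "X' \<subseteq> X" using X'(1) Y_def by auto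
  moreover have "\<forall>\<xi>\<in>X'. set Lp \<subseteq> f \<xi> \<and> set_less (set Lp) (f \<xi> - set Lp) \<and> t \<xi> \<in> f \<xi> - set Lp \<and> (\<forall>z\<in>f \<xi> - set Lp. t \<xi> \<le> z)"
    using props X'(1) by blast
  ultimately show ?thesis using X'(2,3) by blast
qed

context
  fixes F :: "'a::linorder set set" and m nn r :: "nat \<Rightarrow> nat"
  assumes cs: "construction_scheme F m nn r"
begin

lemma cs_type: "is_type m nn r"
  using cs unfolding construction_scheme_def by (elim conjE)

lemma cs_F: "\<forall>G\<in>F. finite G \<and> G \<noteq> {} \<and> (\<exists>k. card G = m k)"
  using cs unfolding construction_scheme_def by (elim conjE)

lemma cs_cof: "\<forall>A. finite A \<longrightarrow> (\<exists>G\<in>F. A \<subseteq> G)"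
  using cs unfolding construction_scheme_def by (elim conjE)

lemma cs_coh: "\<forall>k. \<forall>E\<in>level F m k. \<forall>G\<in>level F m k. init_seg (E \<inter> G) E \<and> init_seg (E \<inter> G) G"
  using cs unfolding construction_scheme_def by (elim conjE)

lemma cs_cp: "\<forall>k. \<forall>G\<in>level F m (Suc k). \<exists>R Gs. canon_pieces F m nn r (Suc k) G R Gs"
  using cs unfolding construction_scheme_def by (elim conjE)

lemma m_Suc: "m k < m (Suc k)"
proof -
  have t: "nn (Suc k) \<ge> 2" "m k > r (Suc k)" "m (Suc k) = r (Suc k) + (m k - r (Suc k)) * nn (Suc k)"
    using cs_type by (auto simp: is_type_def)
  have "(m k - r (Suc k)) * 2 \<le> (m k - r (Suc k)) * nn (Suc k)" using t(1) by simp
  then show ?thesis using t(2,3) by linarith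
qed

lemma m_smono: "strict_mono m"
  using m_Suc by (simp add: strict_mono_Suc_iff)

lemma m_le_iff: "m a \<le> m b \<longleftrightarrow> a \<le> b"
  using m_smono by (simp add: strict_mono_less_eq)

lemma m_pos: "m a \<ge> 1"
proof -
  have "m 0 = 1" using cs_type by (simp add: is_type_def)
  then show ?thesis using m_le_iff[of 0 a] by simp
qed

lemma level_D: "G \<in> level F m k \<Longrightarrow> G \<in> F \<and> finite G \<and> card G = m k \<and> G \<noteq> {}"
  using cs_F m_pos[of k] unfolding level_def by auto

lemma in_level: "G \<in> F \<Longrightarrow> \<exists>k. G \<in> level F m k"
  using cs_F unfolding level_def by auto

lemma cofinal: "finite A \<Longrightarrow> \<exists>k. \<exists>H\<in>level F m k. A \<subseteq> H"
proof -
  assume "finite A"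
  then obtain G where "G \<in> F" "A \<subseteq> G" using cs_cof by blast
  then show ?thesis using in_level by blast
qed

lemma coh: "E \<in> level F m k \<Longrightarrow> G \<in> level F m k \<Longrightarrow> x \<in> E \<Longrightarrow> x \<in> G \<Longrightarrow> y \<in> E \<Longrightarrow> y < x \<Longrightarrow> y \<in> G"
proof -
  assume a: "E \<in> level F m k" "G \<in> level F m k" "x \<in> E" "x \<in> G" "y \<in> E" "y < x"
  then have "init_seg (E \<inter> G) E" using cs_coh by blast
  then show "y \<in> G" using a unfolding init_seg_def by blast
qed

lemma dec1: "G \<in> level F m (Suc k) \<Longrightarrow> x \<in> G \<Longrightarrow> \<exists>Q\<in>level F m k. x \<in> Q \<and> Q \<subseteq> G"
proof -
  assume G: "G \<in> level F m (Suc k)" and x: "x \<in> G"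
  obtain R Gs where cp: "canon_pieces F m nn r (Suc k) G R Gs" using cs_cp G by blast
  then have "(\<forall>i<nn (Suc k). Gs i \<in> level F m k) \<and> G = (\<Union>i<nn (Suc k). Gs i)"
    unfolding canon_pieces_def by auto
  then show ?thesis using x by auto
qed

lemma dec: "H \<in> level F m b \<Longrightarrow> a \<le> b \<Longrightarrow> x \<in> H \<Longrightarrow> \<exists>Q\<in>level F m a. x \<in> Q \<and> Q \<subseteq> H"
proof (induction b arbitrary: H x)
  case 0 then show ?case by auto
next
  case (Suc b)
  show ?case
  proof (cases "a = Suc b")
    case True then show ?thesis using Suc.prems by auto
  next
    case False
    then have "a \<le> b" using Suc.prems by simp
    obtain Q' where "Q' \<in> level F m b" "x \<in> Q'" "Q' \<subseteq> H" using dec1 Suc.prems by blast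
    then show ?thesis using Suc.IH[of Q' x] \<open>a \<le> b\<close> by blast
  qed
qed

lemma lift:
  assumes E: "E \<in> level F m a" and EH: "E \<subseteq> H" and H: "H \<in> level F m h" and ac: "a \<le> c" and ch: "c \<le> h"
  shows "\<exists>Q\<in>level F m c. E \<subseteq> Q"
proof -
  have Ef: "finite E" "E \<noteq> {}" using level_D[OF E] by auto
  define x where "x = Max E"
  have xE: "x \<in> E" using Ef x_def by simp
  obtain Q where Q: "Q \<in> level F m c" "x \<in> Q" "Q \<subseteq> H" using dec[OF H ch] xE EH by blast
  obtain Q' where Q': "Q' \<in> level F m a" "x \<in> Q'" "Q' \<subseteq> Q" using dec[OF Q(1) ac Q(2)] by blast
  have "E \<subseteq> Q'"
  proof
    fix y assume y: "y \<in> E"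
    then have "y \<le> x" using Ef x_def by simp
    then show "y \<in> Q'"
    proof (cases "y = x")
      case False
      then have "y < x" using \<open>y \<le> x\<close> by simp
      then show ?thesis using coh[OF E Q'(1) xE Q'(2) y] by simp
    qed (use Q' in simp)
  qed
  then show ?thesis using Q Q' by blast
qed

lemma rho_ex: "\<exists>k. \<exists>G\<in>level F m k. {x, y} \<subseteq> G"
  using cofinal[of "{x,y}"] by auto

lemma rho_refl: "rho F m x x = 0"
proof -
  obtain k H where "H \<in> level F m k" "{x} \<subseteq> H" using cofinal[of "{x}"] by auto
  then obtain Q where "Q \<in> level F m 0" "x \<in> Q" using dec[of H k 0 x] by auto
  then show ?thesis unfolding rho_def by (intro Least_equality) auto
qed

lemma rho_le: "rho F m x y \<le> k \<Longrightarrow> \<exists>j\<le>k. \<exists>G\<in>level F m j. {x, y} \<subseteq> G"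
  unfolding rho_def using LeastI_ex[OF rho_ex[of x y]] by blast

lemma cp_D:
  assumes "canon_pieces F m nn r l G RG Gs"
  shows "\<exists>k. l = Suc k \<and> G \<in> level F m l \<and> (\<forall>i<nn l. Gs i \<in> level F m k) \<and>
     G = (\<Union>i<nn l. Gs i) \<and> (\<forall>i<nn l. \<forall>j<nn l. i \<noteq> j \<longrightarrow> Gs i \<inter> Gs j = RG)"
  using assms unfolding canon_pieces_def by blast

lemma sep_aux:
  assumes cp: "canon_pieces F m nn r l G RG Gs" and ij: "i < nn l" "j < nn l" "i \<noteq> j"
    and x: "x \<in> Gs i - RG" and y: "y \<in> Gs j - RG" and xy: "x < y"
    and E: "E \<in> level F m l'" "l' < l" "{x, y} \<subseteq> E"
  shows False
proof -
  obtain k where k: "l = Suc k" "\<forall>i<nn l. Gs i \<in> level F m k" "Gs i \<inter> Gs j = RG"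
    using cp ij unfolding canon_pieces_def by blast
  have Gj: "Gs j \<in> level F m k" using k(2) ij(2) by blast
  have fE: "finite (E \<union> Gs j)" using level_D[OF E(1)] level_D[OF Gj] by simp
  obtain h H where H: "H \<in> level F m h" "E \<union> Gs j \<subseteq> H" using cofinal[OF fE] by blast
  have "card (Gs j) \<le> card H" using H(2) level_D[OF H(1)] by (intro card_mono) auto
  then have "m k \<le> m h" using level_D[OF H(1)] level_D[OF Gj] by simp
  then have "k \<le> h" using m_le_iff by simp
  obtain Q where Q: "Q \<in> level F m k" "E \<subseteq> Q" using lift[OF E(1) _ H(1), of k] H(2) E(2) k(1) \<open>k \<le> h\<close> by auto
  have "x \<in> Gs j" using coh[OF Q(1) Gj, of y x] Q(2) E(3) y xy by auto
  then show False using x k(3) by auto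
qed

lemma rho_eq:
  assumes cp: "canon_pieces F m nn r l G RG Gs" and ij: "i < nn l" "j < nn l" "i \<noteq> j"
    and x: "x \<in> Gs i - RG" and y: "y \<in> Gs j - RG"
  shows "rho F m x y = l"
proof -
  obtain k where k: "l = Suc k" "G \<in> level F m l" "\<forall>i<nn l. Gs i \<in> level F m k"
     "G = (\<Union>i<nn l. Gs i)" "\<forall>i<nn l. \<forall>j<nn l. i \<noteq> j \<longrightarrow> Gs i \<inter> Gs j = RG"
    using cp_D[OF cp] by blast
  have G3: "Gs i \<inter> Gs j = RG" using k(5) ij by blast
  have "x \<noteq> y" using x y G3 by blast
  have "x \<in> G" "y \<in> G" using x y ij k(4) by blast+
  then have P: "\<exists>E\<in>level F m l. {x, y} \<subseteq> E" using k(2) by blast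
  have nP: "\<not> (\<exists>E\<in>level F m l'. {x, y} \<subseteq> E)" if "l' < l" for l'
  proof
    assume "\<exists>E\<in>level F m l'. {x, y} \<subseteq> E"
    then obtain E where E: "E \<in> level F m l'" "{x, y} \<subseteq> E" by blast
    show False
    proof (cases "x < y")
      case True show ?thesis using sep_aux[OF cp ij x y True E(1) that E(2)] by simp
    next
      case False
      then have "y < x" using \<open>x \<noteq> y\<close> by simp
      moreover have "{y, x} \<subseteq> E" using E(2) by auto
      moreover have "j \<noteq> i" using ij(3) by simp
      ultimately show ?thesis using sep_aux[OF cp ij(2,1) \<open>j \<noteq> i\<close> y x \<open>y < x\<close> E(1) that] by simp
    qed
  qed
  show ?thesis unfolding rho_def
  proof (rule Least_equality)
    show "\<exists>E\<in>level F m l. {x, y} \<subseteq> E" by (rule P)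
  next
    fix l' assume "\<exists>E\<in>level F m l'. {x, y} \<subseteq> E"
    then show "l \<le> l'" using nP[of l'] by (meson not_le)
  qed
qed

lemma closure_props:
  "finite (closure_k F m \<xi> k) \<and> \<xi> \<in> closure_k F m \<xi> k \<and> (\<forall>z\<in>closure_k F m \<xi> k. z \<le> \<xi>)"
proof -
  define W where "W = (\<lambda>j. {\<zeta>. \<zeta> \<le> \<xi> \<and> (\<exists>E\<in>level F m j. {\<zeta>, \<xi>} \<subseteq> E)})"
  have sub: "closure_k F m \<xi> k \<subseteq> (\<Union>j\<le>k. W j)"
  proof
    fix z assume "z \<in> closure_k F m \<xi> k"
    then have z: "z \<le> \<xi>" "rho F m z \<xi> \<le> k" unfolding closure_k_def by simp_all
    have "\<exists>j\<le>k. \<exists>G\<in>level F m j. {z, \<xi>} \<subseteq> G" by (rule rho_le) (rule z(2))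
    then obtain j where j: "j \<le> k" "\<exists>E\<in>level F m j. {z, \<xi>} \<subseteq> E" by blast
    have "z \<in> W j" unfolding W_def using j(2) z(1) by simp
    then show "z \<in> (\<Union>j\<le>k. W j)" using j(1) by blast
  qed
  have Wf: "finite (W j)" for j
  proof (cases "\<exists>E0\<in>level F m j. \<xi> \<in> E0")
    case True
    then obtain E0 where E0: "E0 \<in> level F m j" "\<xi> \<in> E0" by blast
    have "W j \<subseteq> E0"
    proof
      fix \<zeta> assume "\<zeta> \<in> W j"
      then obtain E where "\<zeta> \<le> \<xi>" "E \<in> level F m j" "\<zeta> \<in> E" "\<xi> \<in> E" unfolding W_def by blast
      then show "\<zeta> \<in> E0" using coh[of E j E0 \<xi> \<zeta>] E0 by (cases "\<zeta> = \<xi>") auto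
    qed
    moreover have "finite E0" using level_D[OF E0(1)] by simp
    ultimately show ?thesis by (rule finite_subset)
  next
    case False
    then have "W j = {}" unfolding W_def by blast
    then show ?thesis by simp
  qed
  have "finite (\<Union>j\<le>k. W j)" using Wf by simp
  then have "finite (closure_k F m \<xi> k)" using sub by (rule finite_subset[rotated])
  moreover have "\<xi> \<in> closure_k F m \<xi> k" unfolding closure_k_def using rho_refl by simp
  moreover have "\<forall>z\<in>closure_k F m \<xi> k. z \<le> \<xi>" unfolding closure_k_def by blast
  ultimately show ?thesis by blast
qed

end

lemma o1_above: "omega1_like TYPE('a::wellorder) \<Longrightarrow> \<exists>y. (x::'a) < y"
  using o1_bounded[of "{x}"] by auto

lemma stationary_uncountable:
  assumes o1: "omega1_like TYPE('a::wellorder)" and S: "stationary (S::'a set)"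
  shows "uncountable S"
proof -
  have "\<exists>x\<in>S. \<alpha> < x" for \<alpha>
  proof -
    have "club {\<gamma>. \<alpha> < \<gamma>}"
      unfolding club_def
    proof (intro conjI allI ballI impI)
      fix \<beta>
      obtain y where "max \<alpha> \<beta> < y" using o1_above[OF o1] by blast
      then show "\<exists>c\<in>{\<gamma>. \<alpha> < \<gamma>}. \<beta> < c" by auto
    next
      fix \<delta> :: 'a
      assume L: "\<delta> \<in> Lim" and h: "\<forall>\<alpha>'<\<delta>. \<exists>c\<in>{\<gamma>. \<alpha> < \<gamma>}. \<alpha>' < c \<and> c < \<delta>"
      obtain a0 where "a0 < \<delta>" using L unfolding Lim_def by blast
      then obtain c where "\<alpha> < c" "c < \<delta>" using h by blast
      then show "\<delta> \<in> {\<gamma>. \<alpha> < \<gamma>}" by simp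
    qed
    then have "S \<inter> {\<gamma>. \<alpha> < \<gamma>} \<noteq> {}" using S unfolding stationary_def by blast
    then show ?thesis by blast
  qed
  then show ?thesis using o1_unbounded_uncountable[OF o1] by blast
qed

lemma LimN_Lim: "LimN C j \<subseteq> Lim"
  by (cases j) auto

lemma cs_D: "clubsuit_seq C \<Longrightarrow> \<delta> \<in> Lim \<Longrightarrow> C \<delta> \<subseteq> {..<\<delta>} \<and> infinite (C \<delta>)"
  unfolding clubsuit_seq_def by blast

lemma CN_below: "clubsuit_seq C \<Longrightarrow> \<delta> \<in> LimN C j \<Longrightarrow> CN C j \<delta> \<subseteq> {..<\<delta>}"
proof (induction j arbitrary: \<delta>)
  case 0 then show ?case using cs_D[of C \<delta>] by simp
next
  case (Suc j)
  have d: "\<delta> \<in> Lim" "C \<delta> \<subseteq> LimN C j" using Suc.prems by auto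
  show ?case
  proof
    fix x assume "x \<in> CN C (Suc j) \<delta>"
    then obtain \<xi> where \<xi>: "\<xi> \<in> C \<delta>" "x \<in> CN C j \<xi>" by auto
    then have "x < \<xi>" using Suc.IH[of \<xi>] Suc.prems(1) d by auto
    moreover have "\<xi> < \<delta>" using cs_D[OF Suc.prems(1) d(1)] \<xi>(1) by auto
    ultimately show "x \<in> {..<\<delta>}" by simp
  qed
qed

lemma CN_infinite: "clubsuit_seq C \<Longrightarrow> \<delta> \<in> LimN C j \<Longrightarrow> infinite (CN C j \<delta>)"
proof (induction j arbitrary: \<delta>)
  case 0 then show ?case using cs_D[of C \<delta>] by simp
next
  case (Suc j)
  have d: "\<delta> \<in> Lim" "C \<delta> \<subseteq> LimN C j" using Suc.prems by auto
  have "C \<delta> \<noteq> {}" using cs_D[OF Suc.prems(1) d(1)] by auto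
  then obtain \<xi> where "\<xi> \<in> C \<delta>" by blast
  then have "infinite (CN C j \<xi>)" using Suc.IH Suc.prems(1) d by blast
  moreover have "CN C j \<xi> \<subseteq> CN C (Suc j) \<delta>" using \<open>\<xi> \<in> C \<delta>\<close> by auto
  ultimately show ?case using finite_subset by blast
qed

lemma stationary_mono: "stationary S \<Longrightarrow> S \<subseteq> T \<Longrightarrow> stationary T"
  unfolding stationary_def by blast

lemma club_find:
  assumes o1: "omega1_like TYPE('a::wellorder)" and cs: "clubsuit_seq (C::'a \<Rightarrow> 'a set)"
  shows "uncountable X \<Longrightarrow> uncountable {\<delta>\<in>LimN C j. CN C j \<delta> \<subseteq> X}"
proof (induction j arbitrary: X)
  case 0
  then have "stationary {\<delta>\<in>Lim. C \<delta> \<subseteq> X}" using cs unfolding clubsuit_seq_def by blast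
  then show ?case using stationary_uncountable[OF o1] by simp
next
  case (Suc j)
  define Y where "Y = {\<delta>\<in>LimN C j. CN C j \<delta> \<subseteq> X}"
  have "uncountable Y" using Suc Y_def by simp
  then have st: "stationary {\<delta>\<in>Lim. C \<delta> \<subseteq> Y}" using cs unfolding clubsuit_seq_def by blast
  have "{\<delta>\<in>Lim. C \<delta> \<subseteq> Y} \<subseteq> {\<delta>\<in>LimN C (Suc j). CN C (Suc j) \<delta> \<subseteq> X}"
    unfolding Y_def by auto
  then show ?case using stationary_mono[OF st] stationary_uncountable[OF o1] by blast
qed

lemma elem_split:
  fixes D :: "'a::linorder set"
  assumes fin: "finite D" and RD: "R \<subseteq> D" and sl: "set_less R (D - R)"
  shows "a < card R \<Longrightarrow> elem D a \<in> R"
    and "card R \<le> a \<Longrightarrow> a < card D \<Longrightarrow> elem D a \<in> D - R"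
proof -
  have fR: "finite R" using fin RD finite_subset by blast
  have fD: "finite (D - R)" using fin by simp
  define l where "l = sorted_list_of_set R @ sorted_list_of_set (D - R)"
  have "sorted_wrt (<) l" unfolding l_def sorted_wrt_append using sl fR fD
    by (auto simp: set_less_def)
  moreover have "set l = D" unfolding l_def using fR fD RD by auto
  moreover have "length l = card D" unfolding l_def using fR fD RD
    by (simp add: card_Diff_subset card_mono)
  ultimately have eq: "sorted_list_of_set D = l"
    using sorted_list_of_set_unique[OF fin] by blast
  have lenR: "length (sorted_list_of_set R) = card R" by simp
  show "a < card R \<Longrightarrow> elem D a \<in> R"
    unfolding elem_def eq l_def using fR
  proof -
    assume a: "a < card R"
    then have "sorted_list_of_set R ! a \<in> set (sorted_list_of_set R)" using lenR by (intro nth_mem) simp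
    then show "(sorted_list_of_set R @ sorted_list_of_set (D - R)) ! a \<in> R" using a fR lenR by (simp add: nth_append)
  qed
  assume a: "card R \<le> a" "a < card D"
  have "card D = card R + card (D - R)" using fR RD fin by (simp add: card_Diff_subset card_mono)
  then have "a - card R < length (sorted_list_of_set (D - R))" using a by simp
  then show "elem D a \<in> D - R"
    unfolding elem_def eq l_def using a fD
  proof -
    have "sorted_list_of_set (D - R) ! (a - card R) \<in> set (sorted_list_of_set (D - R))"
      using \<open>a - card R < length (sorted_list_of_set (D - R))\<close> by (rule nth_mem)
    then show "(sorted_list_of_set R @ sorted_list_of_set (D - R)) ! a \<in> D - R" using a fD lenR by (simp add: nth_append)
  qed
qed

lemma elem_mem: "finite D \<Longrightarrow> a < card D \<Longrightarrow> elem D a \<in> D"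
  unfolding elem_def by (metis length_sorted_list_of_set nth_mem set_sorted_list_of_set)

lemma elem_mono: "finite D \<Longrightarrow> a < b \<Longrightarrow> b < card D \<Longrightarrow> elem D a < elem D b"
  unfolding elem_def
  by (metis length_sorted_list_of_set sorted_wrt_nth_less strict_sorted_list_of_set)

lemma delta_cons:
  assumes P: "\<forall>\<xi>\<in>X. R \<subseteq> f \<xi> \<and> set_less R (f \<xi> - R) \<and> t \<xi> \<in> f \<xi> - R \<and> (\<forall>z\<in>f \<xi> - R. t \<xi> \<le> z)"
    and Q: "\<forall>\<xi>\<in>X. \<forall>\<xi>'\<in>X. \<xi> < \<xi>' \<longrightarrow> \<xi> < t \<xi>'"
    and le: "\<forall>\<xi>\<in>X. \<forall>z\<in>f \<xi>. z \<le> (\<xi>::'a::linorder)"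
    and x: "\<xi> \<in> X" "\<xi>' \<in> X" "\<xi> < \<xi>'"
  shows "f \<xi> \<inter> f \<xi>' = R" "set_less (f \<xi> - R) (f \<xi>' - R)"
proof -
  have a: "\<xi> < t \<xi>'" using Q x by blast
  have b: "\<forall>z\<in>f \<xi>' - R. t \<xi>' \<le> z" "R \<subseteq> f \<xi>" "R \<subseteq> f \<xi>'" using P x by blast+
  have c: "\<forall>z\<in>f \<xi>. z \<le> \<xi>" using le x by blast
  show "f \<xi> \<inter> f \<xi>' = R"
  proof
    show "f \<xi> \<inter> f \<xi>' \<subseteq> R"
    proof
      fix z assume z: "z \<in> f \<xi> \<inter> f \<xi>'"
      show "z \<in> R"
      proof (rule ccontr)
        assume "z \<notin> R"
        then have "t \<xi>' \<le> z" using b z by blast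
        moreover have "z \<le> \<xi>" using c z by blast
        ultimately show False using a by simp
      qed
    qed
  qed (use b in blast)
  show "set_less (f \<xi> - R) (f \<xi>' - R)" unfolding set_less_def
  proof (intro ballI)
    fix y z assume "y \<in> f \<xi> - R" "z \<in> f \<xi>' - R"
    then have "y \<le> \<xi>" "t \<xi>' \<le> z" using b c by blast+
    then show "y < z" using a by simp
  qed
qed

lemma two_elems: "infinite A \<Longrightarrow> \<exists>x y. x \<in> A \<and> y \<in> A \<and> x < (y::'a::linorder)"
proof -
  assume "infinite A"
  then obtain x where x: "x \<in> A" by (metis finite.emptyI ex_in_conv)
  have "infinite (A - {x})" using \<open>infinite A\<close> by simp
  then obtain y where y: "y \<in> A - {x}" by (metis finite.emptyI ex_in_conv)
  show ?thesis
  proof (cases "x < y")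
    case True then show ?thesis using x y by blast
  next
    case False then have "y < x" using y by auto
    then show ?thesis using x y by blast
  qed
qed

lemma delta_obt:
  fixes X :: "'a::wellorder set" and f :: "'a \<Rightarrow> 'a set"
  assumes o1: "omega1_like TYPE('a)" and X: "uncountable X"
    and fin: "\<forall>\<xi>\<in>X. finite (f \<xi>) \<and> \<xi> \<in> f \<xi> \<and> (\<forall>z\<in>f \<xi>. z \<le> \<xi>) \<and> card (f \<xi>) = M"
  obtains X' R t where "X' \<subseteq> X" "uncountable X'"
     "\<forall>\<xi>\<in>X'. R \<subseteq> f \<xi> \<and> set_less R (f \<xi> - R) \<and> t \<xi> \<in> f \<xi> - R \<and> (\<forall>z\<in>f \<xi> - R. t \<xi> \<le> z)"
     "\<forall>\<xi>\<in>X'. \<forall>\<xi>'\<in>X'. \<xi> < \<xi>' \<longrightarrow> \<xi> < t \<xi>'"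
proof -
  from delta[OF o1 X fin] obtain X' R t where "X' \<subseteq> X" "uncountable X'"
     "\<forall>\<xi>\<in>X'. R \<subseteq> f \<xi> \<and> set_less R (f \<xi> - R) \<and> t \<xi> \<in> f \<xi> - R \<and> (\<forall>z\<in>f \<xi> - R. t \<xi> \<le> z)"
     "\<forall>\<xi>\<in>X'. \<forall>\<xi>'\<in>X'. \<xi> < \<xi>' \<longrightarrow> \<xi> < t \<xi>'"
    by (elim exE conjE)
  then show ?thesis using that by blast
qed

theorem mainTheorem18:
  fixes C :: "'a::wellorder \<Rightarrow> 'a set"
    and F :: "'a set set"
    and m nn r :: "nat \<Rightarrow> nat"
    and n :: nat
  assumes "omega1_like TYPE('a)"
    and "clubsuit_seq C"
    and "n \<ge> 1"
    and "construction_scheme F m nn r"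
    and "good_type m nn r"
    and "IH_rho C F m nn r n"
  shows "rho_capturing F m nn r (n + 1)"
proof -
  note o1 = assms(1) and csq = assms(2) and n1 = assms(3) and cs = assms(4) and IH = assms(6)
  show ?thesis unfolding rho_capturing_def
  proof (intro allI impI)
    fix S :: "'a set set"
    assume Sa: "uncountable S \<and> (\<forall>s\<in>S. finite s \<and> s \<noteq> {})"
    then have Su: "uncountable S" and Sf: "\<And>s. s \<in> S \<Longrightarrow> finite s \<and> s \<noteq> {}" by auto
    define X0 where "X0 = Max ` S"
    have X0u: "uncountable X0"
    proof
      assume c: "countable X0"
      have "S \<subseteq> (\<Union>\<xi>\<in>X0. {s. finite s \<and> s \<subseteq> {..\<xi>}})"
      proof
        fix s assume "s \<in> S"
        then have "Max s \<in> X0" "finite s" "s \<subseteq> {..Max s}" using Sf X0_def by auto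
        then show "s \<in> (\<Union>\<xi>\<in>X0. {s. finite s \<and> s \<subseteq> {..\<xi>}})" by blast
      qed
      moreover have "countable (\<Union>\<xi>\<in>X0. {s. finite s \<and> s \<subseteq> {..\<xi>}})"
        using c o1_countable_le[OF o1] by (intro countable_UN countable_Collect_finite_subset) auto
      ultimately show False using Su countable_subset by blast
    qed
    define s where "s = (\<lambda>\<xi>. SOME t. t \<in> S \<and> Max t = \<xi>)"
    have sS: "s \<xi> \<in> S \<and> Max (s \<xi>) = \<xi>" if x0: "\<xi> \<in> X0" for \<xi>
    proof -
      obtain t where "t \<in> S" "Max t = \<xi>" using x0 X0_def by auto
      then show ?thesis unfolding s_def by (rule someI[where P="\<lambda>t. t \<in> S \<and> Max t = \<xi>", OF conjI])
    qed
    have sP: "finite (s \<xi>) \<and> \<xi> \<in> s \<xi> \<and> (\<forall>z\<in>s \<xi>. z \<le> \<xi>)" if "\<xi> \<in> X0" for \<xi>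
    proof -
      have "finite (s \<xi>)" "s \<xi> \<noteq> {}" "Max (s \<xi>) = \<xi>" using sS[OF that] Sf by auto
      then show ?thesis by (metis Max_ge Max_in)
    qed
    define kk where "kk = (\<lambda>\<xi>. Max ((\<lambda>x. rho F m x \<xi>) ` s \<xi>))"
    obtain trip where X1u: "uncountable {\<xi>\<in>X0. (kk \<xi>, card (closure_k F m \<xi> (kk \<xi>)), card (s \<xi>)) = trip}"
      using pigeon[OF X0u, of UNIV "\<lambda>\<xi>. (kk \<xi>, card (closure_k F m \<xi> (kk \<xi>)), card (s \<xi>))"] by auto
    obtain k M Ms where trip: "trip = (k, M, Ms)" by (cases trip) auto
    define X1 where "X1 = {\<xi>\<in>X0. (kk \<xi>, card (closure_k F m \<xi> (kk \<xi>)), card (s \<xi>)) = trip}"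
    have X1u': "uncountable X1" using X1u X1_def by simp
    have X1P: "\<xi> \<in> X0 \<and> kk \<xi> = k \<and> card (closure_k F m \<xi> k) = M \<and> card (s \<xi>) = Ms" if "\<xi> \<in> X1" for \<xi>
      using that unfolding X1_def trip by auto
    define T where "T = (\<lambda>\<xi>. closure_k F m \<xi> k)"
    have sT: "s \<xi> \<subseteq> T \<xi>" if "\<xi> \<in> X1" for \<xi>
    proof
      fix z assume z: "z \<in> s \<xi>"
      have x0: "\<xi> \<in> X0" "kk \<xi> = k" using X1P[OF that] by auto
      have "rho F m z \<xi> \<le> kk \<xi>" unfolding kk_def using sP[OF x0(1)] z by (intro Max_ge) auto
      moreover have "z \<le> \<xi>" using sP[OF x0(1)] z by blast
      ultimately show "z \<in> T \<xi>" unfolding T_def closure_k_def using x0(2) by simp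
    qed
    have TP: "finite (T \<xi>) \<and> \<xi> \<in> T \<xi> \<and> (\<forall>z\<in>T \<xi>. z \<le> \<xi>)" for \<xi>
      unfolding T_def by (rule closure_props[OF cs])
    have fin1: "\<forall>\<xi>\<in>X1. finite (s \<xi>) \<and> \<xi> \<in> s \<xi> \<and> (\<forall>z\<in>s \<xi>. z \<le> \<xi>) \<and> card (s \<xi>) = Ms"
    proof
      fix \<xi> assume x: "\<xi> \<in> X1"
      show "finite (s \<xi>) \<and> \<xi> \<in> s \<xi> \<and> (\<forall>z\<in>s \<xi>. z \<le> \<xi>) \<and> card (s \<xi>) = Ms"
        using sP[of \<xi>] X1P[OF x] by simp
    qed
    obtain X2 R ts where X2: "X2 \<subseteq> X1" "uncountable X2"
      "\<forall>\<xi>\<in>X2. R \<subseteq> s \<xi> \<and> set_less R (s \<xi> - R) \<and> ts \<xi> \<in> s \<xi> - R \<and> (\<forall>z\<in>s \<xi> - R. ts \<xi> \<le> z)"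
      "\<forall>\<xi>\<in>X2. \<forall>\<xi>'\<in>X2. \<xi> < \<xi>' \<longrightarrow> \<xi> < ts \<xi>'"
      by (rule delta_obt[OF o1 X1u' fin1])
    have fin2: "\<forall>\<xi>\<in>X2. finite (T \<xi>) \<and> \<xi> \<in> T \<xi> \<and> (\<forall>z\<in>T \<xi>. z \<le> \<xi>) \<and> card (T \<xi>) = M"
    proof
      fix \<xi> assume x: "\<xi> \<in> X2"
      then have "\<xi> \<in> X1" using X2(1) by blast
      then show "finite (T \<xi>) \<and> \<xi> \<in> T \<xi> \<and> (\<forall>z\<in>T \<xi>. z \<le> \<xi>) \<and> card (T \<xi>) = M"
        using TP[of \<xi>] X1P[of \<xi>] unfolding T_def by simp
    qed
    obtain X3 R' tT where X3: "X3 \<subseteq> X2" "uncountable X3"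
      "\<forall>\<xi>\<in>X3. R' \<subseteq> T \<xi> \<and> set_less R' (T \<xi> - R') \<and> tT \<xi> \<in> T \<xi> - R' \<and> (\<forall>z\<in>T \<xi> - R'. tT \<xi> \<le> z)"
      "\<forall>\<xi>\<in>X3. \<forall>\<xi>'\<in>X3. \<xi> < \<xi>' \<longrightarrow> \<xi> < tT \<xi>'"
      by (rule delta_obt[OF o1 X2(2) fin2])
    have sle: "\<forall>\<xi>\<in>X2. \<forall>z\<in>s \<xi>. z \<le> \<xi>"
    proof
      fix \<xi> assume "\<xi> \<in> X2"
      then have "\<xi> \<in> X1" using X2(1) by blast
      then show "\<forall>z\<in>s \<xi>. z \<le> \<xi>" using fin1 by blast
    qed
    have Tle: "\<forall>\<xi>\<in>X3. \<forall>z\<in>T \<xi>. z \<le> \<xi>" using TP by simp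
    have cons_s: "s \<xi> \<inter> s \<xi>' = R" "set_less (s \<xi> - R) (s \<xi>' - R)"
      if "\<xi> \<in> X2" "\<xi>' \<in> X2" "\<xi> < \<xi>'" for \<xi> \<xi>'
      using delta_cons[OF X2(3) X2(4) sle that] by auto
    have cons_T: "T \<xi> \<inter> T \<xi>' = R'" "set_less (T \<xi> - R') (T \<xi>' - R')"
      if "\<xi> \<in> X3" "\<xi>' \<in> X3" "\<xi> < \<xi>'" for \<xi> \<xi>'
      using delta_cons[OF X3(3) X3(4) Tle that] by auto
    have cnt_ts: "countable {\<xi>\<in>X2. ts \<xi> \<le> \<beta>}" for \<beta>
    proof -
      have "inj_on ts {\<xi>\<in>X2. ts \<xi> \<le> \<beta>}"
      proof (rule inj_onI)
        fix x y assume xy: "x \<in> {\<xi>\<in>X2. ts \<xi> \<le> \<beta>}" "y \<in> {\<xi>\<in>X2. ts \<xi> \<le> \<beta>}" "ts x = ts y"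
        have tx: "ts x \<le> x" "ts y \<le> y" using X2(3) sle xy(1,2) by auto
        show "x = y"
        proof (rule ccontr)
          assume "x \<noteq> y"
          then have "x < y \<or> y < x" by auto
          then show False
          proof
            assume "x < y" then have "x < ts y" using X2(4) xy by blast
            then show False using tx xy(3) by simp
          next
            assume "y < x" then have "y < ts x" using X2(4) xy by blast
            then show False using tx xy(3) by simp
          qed
        qed
      qed
      moreover have "countable (ts ` {\<xi>\<in>X2. ts \<xi> \<le> \<beta>})"
        using o1_countable_le[OF o1, of \<beta>] by (rule countable_subset[rotated]) auto
      ultimately show ?thesis using countable_image_inj_on by blast
    qed
    have fR': "finite R'"
    proof -
      obtain \<xi> where "\<xi> \<in> X3" using X3(2) by (metis countable_empty ex_in_conv)
      then have "R' \<subseteq> T \<xi>" "finite (T \<xi>)" using X3(3) TP by auto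
      then show ?thesis by (rule finite_subset)
    qed
    obtain \<gamma> where \<gamma>: "\<forall>z\<in>R'. z < \<gamma>" using o1_bounded[OF o1, of R'] fR' by (auto intro: countable_finite)
    define X4 where "X4 = {\<xi>\<in>X3. \<gamma> \<le> ts \<xi>}"
    have X4u: "uncountable X4"
    proof
      assume c: "countable X4"
      have "X3 \<subseteq> X4 \<union> {\<xi>\<in>X2. ts \<xi> \<le> \<gamma>}" unfolding X4_def using X3(1) by auto
      moreover have "countable (X4 \<union> {\<xi>\<in>X2. ts \<xi> \<le> \<gamma>})" using c cnt_ts by simp
      ultimately show False using X3(2) countable_subset by blast
    qed
    have X4sub: "X4 \<subseteq> X3" unfolding X4_def by auto
    obtain \<delta> where \<delta>: "\<delta> \<in> LimN C n" "CN C n \<delta> \<subseteq> X4"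
      using club_find[OF o1 csq X4u, of n] by (metis (no_types, lifting) countable_empty ex_in_conv mem_Collect_eq)
    have CNb: "CN C n \<delta> \<subseteq> {..<\<delta>}" using CN_below[OF csq \<delta>(1)] .
    have CNi: "infinite (CN C n \<delta>)" using CN_infinite[OF csq \<delta>(1)] .
    obtain \<beta> where \<beta>: "\<beta> \<in> X4" "\<delta> < ts \<beta>"
    proof -
      have "\<not> X4 \<subseteq> {\<xi>\<in>X2. ts \<xi> \<le> \<delta>}" using X4u cnt_ts countable_subset by blast
      then obtain x where x: "x \<in> X4" "\<not> (x \<in> X2 \<and> ts x \<le> \<delta>)" by blast
      have "x \<in> X2" using x(1) X4sub X3(1) by blast
      then have "\<delta> < ts x" using x(2) by (simp add: not_le)
      then show ?thesis using that x(1) by blast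
    qed
    have rtt: "rtt_family ((\<lambda>\<xi>. closure_k F m \<xi> k) ` CN C n \<delta>) R'"
    proof -
      have CN3: "CN C n \<delta> \<subseteq> X3" using \<delta>(2) X4sub by blast
      have img: "(\<lambda>\<xi>. closure_k F m \<xi> k) ` CN C n \<delta> = T ` CN C n \<delta>" unfolding T_def by simp
      have dist: "T \<xi> \<noteq> T \<xi>'" if "\<xi> \<in> X3" "\<xi>' \<in> X3" "\<xi> < \<xi>'" for \<xi> \<xi>'
      proof
        assume e: "T \<xi> = T \<xi>'"
        have "T \<xi> = R'" using cons_T(1)[OF that] e by simp
        then show False using X3(3) that(1) by blast
      qed
      obtain x y where xy: "x \<in> CN C n \<delta>" "y \<in> CN C n \<delta>" "x < y" using two_elems[OF CNi] by blast
      have c1: "\<exists>D E. D \<in> T ` CN C n \<delta> \<and> E \<in> T ` CN C n \<delta> \<and> D \<noteq> E"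
      proof (intro exI conjI)
        show "T x \<in> T ` CN C n \<delta>" "T y \<in> T ` CN C n \<delta>" using xy by auto
        show "T x \<noteq> T y" using dist[of x y] xy CN3 by blast
      qed
      have c2: "\<exists>mm. \<forall>D\<in>T ` CN C n \<delta>. finite D \<and> card D = mm"
      proof (intro exI ballI)
        fix D assume "D \<in> T ` CN C n \<delta>"
        then obtain \<xi> where "\<xi> \<in> X2" "D = T \<xi>" using CN3 X3(1) by blast
        then show "finite D \<and> card D = M" using fin2 by blast
      qed
      have c3: "\<forall>D\<in>T ` CN C n \<delta>. \<forall>E\<in>T ` CN C n \<delta>. D \<noteq> E \<longrightarrow> D \<inter> E = R' \<and>
          (set_less (D - R') (E - R') \<or> set_less (E - R') (D - R'))"
      proof (intro ballI impI)
        fix D E assume DE: "D \<in> T ` CN C n \<delta>" "E \<in> T ` CN C n \<delta>" "D \<noteq> E"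
        then obtain \<xi> \<xi>' where e0: "\<xi> \<in> CN C n \<delta>" "\<xi>' \<in> CN C n \<delta>" "D = T \<xi>" "E = T \<xi>'" by blast
        then have e: "\<xi> \<in> X3" "\<xi>' \<in> X3" using CN3 by blast+
        have "\<xi> \<noteq> \<xi>'" using e0 DE(3) by blast
        then have "\<xi> < \<xi>' \<or> \<xi>' < \<xi>" by auto
        then show "D \<inter> E = R' \<and> (set_less (D - R') (E - R') \<or> set_less (E - R') (D - R'))"
        proof
          assume "\<xi> < \<xi>'" then show ?thesis using cons_T[OF e(1,2)] e0(3,4) by simp
        next
          assume "\<xi>' < \<xi>" then show ?thesis using cons_T[OF e(2,1)] e0(3,4) by (simp add: Int_commute)
        qed
      qed
      have c4: "\<forall>D\<in>T ` CN C n \<delta>. set_less R' (D - R')"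
      proof
        fix D assume "D \<in> T ` CN C n \<delta>"
        then obtain \<xi> where "\<xi> \<in> X3" "D = T \<xi>" using CN3 by blast
        then show "set_less R' (D - R')" using X3(3) by blast
      qed
      have c5: "\<forall>D\<in>T ` CN C n \<delta>. \<forall>E\<in>T ` CN C n \<delta>. D \<noteq> E \<longrightarrow> D \<inter> E = R'"
        using c3 by blast
      have c6: "\<forall>D\<in>T ` CN C n \<delta>. \<forall>E\<in>T ` CN C n \<delta>. D \<noteq> E \<longrightarrow> set_less (D - R') (E - R') \<or> set_less (E - R') (D - R')"
        using c3 by blast
      show ?thesis unfolding img rtt_family_def using c1 c2 c4 c5 c6 by (intro conjI)
    qed
    define A where "A = s \<beta> - R"
    have \<beta>X: "\<beta> \<in> X3" "\<beta> \<in> X2" "\<beta> \<in> X1" "\<beta> \<in> X0" using \<beta>(1) X4sub X3(1) X2(1) X1_def by auto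
    have Ane: "A \<noteq> {}" using X2(3) \<beta>X(2) A_def by blast
    have Afin: "finite A" using sP[OF \<beta>X(4)] A_def by simp
    have Age: "\<forall>a\<in>A. \<delta> \<le> a"
    proof
      fix a assume "a \<in> A"
      then have "ts \<beta> \<le> a" using X2(3) \<beta>X(2) A_def by blast
      then show "\<delta> \<le> a" using \<beta>(2) by simp
    qed
    have gt: "good_tuple C F m n \<delta> k A" unfolding good_tuple_def
    proof (intro conjI)
      show "\<exists>R. rtt_family ((\<lambda>\<xi>. closure_k F m \<xi> k) ` CN C n \<delta>) R" using rtt by (rule exI)
    qed (use \<delta>(1) Ane Afin Age in simp_all)
    have Linf: "infinite {l. l \<ge> k \<and> nn l > n \<and>
          (\<exists>G RG Gs D. canon_pieces F m nn r l G RG Gs \<and>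
             D \<subseteq> CN C n \<delta> \<and> finite D \<and> card D = n \<and>
             A \<subseteq> Gs n - RG \<and>
             (\<forall>i<n. closure_k F m (elem D i) k \<subseteq> Gs i \<and>
                     closure_k F m (elem D i) k \<inter> RG = R'))}" (is "infinite ?L")
      using IH[unfolded IH_rho_def, rule_format, OF conjI[OF gt rtt]] .
    have "?L \<subseteq> {l. \<exists>Ds. (\<forall>i<n + 1. Ds i \<in> S) \<and> inj_on Ds {..<n + 1} \<and> rho_captured F m nn r Ds (n + 1) l}"
    proof
      fix l assume "l \<in> ?L"
      then have lL: "l \<ge> k" "nn l > n" "\<exists>G RG Gs D. canon_pieces F m nn r l G RG Gs \<and>
             D \<subseteq> CN C n \<delta> \<and> finite D \<and> card D = n \<and>
             A \<subseteq> Gs n - RG \<and>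
             (\<forall>i<n. closure_k F m (elem D i) k \<subseteq> Gs i \<and>
                     closure_k F m (elem D i) k \<inter> RG = R')" by simp_all
      from lL(3) obtain G RG Gs D where L: "canon_pieces F m nn r l G RG Gs"
             "D \<subseteq> CN C n \<delta>" "finite D" "card D = n"
             "A \<subseteq> Gs n - RG"
             "\<forall>i<n. closure_k F m (elem D i) k \<subseteq> Gs i \<and> closure_k F m (elem D i) k \<inter> RG = R'"
        by (elim exE conjE)
      have nl: "n < nn l" using lL(2) .
      obtain k' where k': "l = Suc k'" "G \<in> level F m l" "\<forall>i<nn l. Gs i \<in> level F m k'"
        "G = (\<Union>i<nn l. Gs i)" "\<forall>i<nn l. \<forall>j<nn l. i \<noteq> j \<longrightarrow> Gs i \<inter> Gs j = RG"
        using cp_D[OF cs L(1)] by blast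
      have GsG: "Gs i \<subseteq> G" if "i < nn l" for i using k'(4) that by blast
      have RGG: "RG \<subseteq> G"
      proof -
        have a: "0 < nn l" "1 < nn l" using nl n1 by auto
        then have "Gs 0 \<inter> Gs 1 = RG" using k'(5) by auto
        then show ?thesis using GsG[of 0] a(1) by blast
      qed
      define idx where "idx = (\<lambda>i. if i < n then elem D i else \<beta>)"
      define Ds where "Ds = (\<lambda>i. s (idx i))"
      have elD: "elem D i \<in> D" if "i < n" for i using elem_mem[OF L(3)] L(4) that by simp
      have DX4: "elem D i \<in> X4" if "i < n" for i using elD[OF that] L(2) \<delta>(2) by blast
      have elD_lt: "elem D i < \<delta>" if "i < n" for i using elD[OF that] L(2) CNb by blast
      have idxX4: "idx i \<in> X4" if "i < n + 1" for i
        unfolding idx_def using DX4 \<beta>(1) by simp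
      have idxX3: "idx i \<in> X3" if "i < n + 1" for i using idxX4[OF that] X4sub by blast
      have idxX2: "idx i \<in> X2" if "i < n + 1" for i using idxX3[OF that] X3(1) by blast
      have idxX1: "idx i \<in> X1" if "i < n + 1" for i using idxX2[OF that] X2(1) by blast
      have idxX0: "idx i \<in> X0" if "i < n + 1" for i using X1P[OF idxX1[OF that]] by blast
      have tsb: "ts \<beta> \<le> \<beta>" using X2(3) sle \<beta>X(2) by blast
      have \<beta>gt: "\<delta> < \<beta>" using \<beta>(2) tsb by simp
      have idx_mono: "idx i < idx j" if ij: "i < j" "j < n + 1" for i j
      proof (cases "j < n")
        case True
        then have "i < n" using ij(1) by simp
        have "elem D i < elem D j" using elem_mono[OF L(3) ij(1)] L(4) True by simp
        then show ?thesis unfolding idx_def using True \<open>i < n\<close> by simp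
      next
        case False
        have "i < n" using ij False by simp
        then have "idx i < \<delta>" unfolding idx_def using elD_lt by simp
        moreover have "idx j = \<beta>" unfolding idx_def using False by simp
        ultimately show ?thesis using \<beta>gt by simp
      qed
      have Ds_S: "\<forall>i<n + 1. Ds i \<in> S"
      proof (intro allI impI)
        fix i assume "i < n + 1"
        then show "Ds i \<in> S" unfolding Ds_def using sS[OF idxX0] by blast
      qed
      have inj: "inj_on Ds {..<n + 1}"
      proof (rule inj_onI)
        fix i j assume ij: "i \<in> {..<n + 1}" "j \<in> {..<n + 1}" "Ds i = Ds j"
        have i: "i < n + 1" and j: "j < n + 1" using ij(1,2) by auto
        have "Max (Ds i) = idx i" unfolding Ds_def using sS[OF idxX0[OF i]] by blast
        moreover have "Max (Ds j) = idx j" unfolding Ds_def using sS[OF idxX0[OF j]] by blast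
        ultimately have e: "idx i = idx j" using ij(3) by simp
        show "i = j"
        proof (rule ccontr)
          assume "i \<noteq> j"
          then have "i < j \<or> j < i" by auto
          then show False
          proof
            assume "i < j" then show False using idx_mono[OF _ j] e by fastforce
          next
            assume "j < i" then show False using idx_mono[OF _ i] e by fastforce
          qed
        qed
      qed
      have n0: "0 < n" using n1 by simp
      have R_R': "R \<subseteq> R'"
      proof -
        have a: "elem D 0 \<in> X3" "\<beta> \<in> X3" "elem D 0 < \<beta>"
          using DX4[OF n0] X4sub \<beta>X(1) elD_lt[OF n0] \<beta>gt by auto
        have "elem D 0 \<in> X2" "elem D 0 \<in> X1" using a(1) X3(1) X2(1) by blast+
        then have "R \<subseteq> T (elem D 0)" using X2(3) sT by blast
        moreover have "R \<subseteq> T \<beta>" using X2(3) sT \<beta>X by blast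
        ultimately show ?thesis using cons_T(1)[OF a] by blast
      qed
      have R'RG: "R' \<subseteq> RG" using L(6) n0 by blast
      have tails: "Ds i - R \<subseteq> Gs i - RG" if "i < n + 1" for i
      proof (cases "i < n")
        case True
        define \<xi> where "\<xi> = elem D i"
        have x: "\<xi> \<in> X4" "\<xi> \<in> X2" "\<xi> \<in> X1" using DX4[OF True] X4sub X3(1) X2(1) \<xi>_def by blast+
        have Dsi: "Ds i = s \<xi>" unfolding Ds_def idx_def \<xi>_def using True by simp
        have cl: "s \<xi> \<subseteq> Gs i" "T \<xi> \<inter> RG = R'" using L(6) True sT[OF x(3)] unfolding T_def \<xi>_def by blast+
        show ?thesis
        proof
          fix z assume z: "z \<in> Ds i - R"
          then have zs: "z \<in> s \<xi>" "z \<notin> R" using Dsi by auto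
          have "z \<notin> RG"
          proof
            assume "z \<in> RG"
            then have "z \<in> R'" using cl(2) sT[OF x(3)] zs(1) by blast
            then have "z < \<gamma>" using \<gamma> by blast
            moreover have "\<gamma> \<le> ts \<xi>" using x(1) X4_def by simp
            moreover have "ts \<xi> \<le> z" using X2(3) x(2) zs by blast
            ultimately show False by simp
          qed
          then show "z \<in> Gs i - RG" using cl(1) zs(1) by blast
        qed
      next
        case False
        then have "i = n" using that by simp
        then have "Ds i = s \<beta>" unfolding Ds_def idx_def by simp
        then show ?thesis using L(5) A_def \<open>i = n\<close> by simp
      qed
      have RDs: "R \<subseteq> Ds i \<and> set_less R (Ds i - R) \<and> finite (Ds i) \<and> card (Ds i) = Ms" if "i < n + 1" for i
      proof -
        have "R \<subseteq> Ds i \<and> set_less R (Ds i - R)" using X2(3) idxX2[OF that] unfolding Ds_def by blast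
        moreover have "finite (Ds i) \<and> card (Ds i) = Ms" using fin1 idxX1[OF that] unfolding Ds_def by blast
        ultimately show ?thesis by blast
      qed
      have pair: "Ds i \<inter> Ds j = R \<and> set_less (Ds i - R) (Ds j - R)" if "i < j" "j < n + 1" for i j
        using cons_s[OF idxX2[of i] idxX2[OF that(2)] idx_mono[OF that]] that unfolding Ds_def by simp
      have card0: "card (Ds 0) = Ms" using RDs[of 0] by simp
      have rtt_s: "rtt_seq Ds (n + 1) R"
        unfolding rtt_seq_def
      proof (intro conjI allI impI)
        show "2 \<le> n + 1" using n1 by simp
      next
        fix i assume "i < n + 1" then show "finite (Ds i)" using RDs by blast
      next
        fix i assume "i < n + 1" then show "card (Ds i) = card (Ds 0)" using RDs card0 by simp
      next
        fix i assume "i < n + 1" then show "set_less R (Ds i - R)" using RDs by blast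
      next
        fix i j assume "i < j \<and> j < n + 1" then show "set_less (Ds i - R) (Ds j - R)" using pair by blast
      next
        fix i j assume a: "i < n + 1" "j < n + 1" "i \<noteq> j"
        then have "i < j \<or> j < i" by auto
        then show "Ds i \<inter> Ds j = R"
        proof
          assume "i < j" then show ?thesis using pair a by blast
        next
          assume "j < i" then show ?thesis using pair[of j i] a by (simp add: Int_commute)
        qed
      qed
      have xi: "(a < card R \<longrightarrow> Xi F m nn r (elem (Ds i) a) l (-1)) \<and>
                (a \<ge> card R \<longrightarrow> Xi F m nn r (elem (Ds i) a) l (int i))"
        if i: "i < n + 1" and a: "a < card (Ds 0)" for i a
      proof (intro conjI impI)
        have r: "finite (Ds i)" "R \<subseteq> Ds i" "set_less R (Ds i - R)" "card (Ds i) = card (Ds 0)"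
          using RDs[OF i] card0 by auto
        assume "a < card R"
        then have "elem (Ds i) a \<in> R" using elem_split(1)[OF r(1-3)] by blast
        then have "elem (Ds i) a \<in> RG" using R_R' R'RG by blast
        then show "Xi F m nn r (elem (Ds i) a) l (-1)" unfolding Xi_def using L(1) RGG by blast
      next
        have r: "finite (Ds i)" "R \<subseteq> Ds i" "set_less R (Ds i - R)" "card (Ds i) = card (Ds 0)"
          using RDs[OF i] card0 by auto
        assume "card R \<le> a"
        then have "elem (Ds i) a \<in> Ds i - R" using elem_split(2)[OF r(1-3)] a r(4) by simp
        then have e: "elem (Ds i) a \<in> Gs i - RG" using tails[OF i] by blast
        have "i < nn l" using i nl by simp
        then have "elem (Ds i) a \<in> G" using e GsG by blast
        then show "Xi F m nn r (elem (Ds i) a) l (int i)" unfolding Xi_def using L(1) e by auto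
      qed
      have rh: "rho F m (elem (Ds i) a) (elem (Ds j) a) = l"
        if "i < j" "j < n + 1" "card R \<le> a" "a < card (Ds 0)" for i j a
      proof -
        have i: "i < n + 1" using that by simp
        have ri: "finite (Ds i)" "R \<subseteq> Ds i" "set_less R (Ds i - R)" "card (Ds i) = card (Ds 0)"
          using RDs[OF i] card0 by auto
        have rj: "finite (Ds j)" "R \<subseteq> Ds j" "set_less R (Ds j - R)" "card (Ds j) = card (Ds 0)"
          using RDs[OF that(2)] card0 by auto
        have "elem (Ds i) a \<in> Ds i - R" using elem_split(2)[OF ri(1-3)] that ri(4) by simp
        then have x: "elem (Ds i) a \<in> Gs i - RG" using tails[OF i] by blast
        have "elem (Ds j) a \<in> Ds j - R" using elem_split(2)[OF rj(1-3)] that rj(4) by simp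
        then have y: "elem (Ds j) a \<in> Gs j - RG" using tails[OF that(2)] by blast
        have "i < nn l" "j < nn l" "i \<noteq> j" using that nl by auto
        then show ?thesis using rho_eq[OF cs L(1) _ _ _ x y] by blast
      qed
      have c4: "\<forall>i<n + 1. \<forall>a<card (Ds 0). (a < card R \<longrightarrow> Xi F m nn r (elem (Ds i) a) l (-1)) \<and>
                (a \<ge> card R \<longrightarrow> Xi F m nn r (elem (Ds i) a) l (int i))"
      proof (intro allI impI)
        fix i a assume "i < n + 1" "a < card (Ds 0)"
        then show "(a < card R \<longrightarrow> Xi F m nn r (elem (Ds i) a) l (-1)) \<and>
                (a \<ge> card R \<longrightarrow> Xi F m nn r (elem (Ds i) a) l (int i))" by (rule xi)
      qed
      have c5: "\<forall>i j a. i < j \<and> j < n + 1 \<and> card R \<le> a \<and> a < card (Ds 0) \<longrightarrow>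
          rho F m (elem (Ds i) a) (elem (Ds j) a) = l"
      proof (intro allI impI)
        fix i j a assume "i < j \<and> j < n + 1 \<and> card R \<le> a \<and> a < card (Ds 0)"
        then show "rho F m (elem (Ds i) a) (elem (Ds j) a) = l" using rh by (elim conjE)
      qed
      have c1: "1 \<le> l" using k'(1) by simp
      have c2: "n + 1 \<le> nn l" using nl by simp
      have "\<exists>R. rtt_seq Ds (n + 1) R \<and>
       (\<forall>i<n + 1. \<forall>a<card (Ds 0).
          (a < card R \<longrightarrow> Xi F m nn r (elem (Ds i) a) l (-1)) \<and>
          (a \<ge> card R \<longrightarrow> Xi F m nn r (elem (Ds i) a) l (int i))) \<and>
       (\<forall>i j a. i < j \<and> j < n + 1 \<and> card R \<le> a \<and> a < card (Ds 0) \<longrightarrow>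
          rho F m (elem (Ds i) a) (elem (Ds j) a) = l)"
        using rtt_s c4 c5 by (intro exI[of _ R] conjI)
      then have rc: "rho_captured F m nn r Ds (n + 1) l"
        unfolding rho_captured_def using c1 c2 by (intro conjI)
      have "(\<forall>i<n + 1. Ds i \<in> S) \<and> inj_on Ds {..<n + 1} \<and> rho_captured F m nn r Ds (n + 1) l"
        using Ds_S inj rc by (intro conjI)
      then show "l \<in> {l. \<exists>Ds. (\<forall>i<n + 1. Ds i \<in> S) \<and> inj_on Ds {..<n + 1} \<and> rho_captured F m nn r Ds (n + 1) l}"
        by (intro CollectI exI[of _ Ds])
    qed
    then show "infinite {l. \<exists>Ds. (\<forall>i<n + 1. Ds i \<in> S) \<and> inj_on Ds {..<n + 1} \<and> rho_captured F m nn r Ds (n + 1) l}"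
      using Linf by (rule infinite_super)
  qed
qed

end
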